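(* There is an absolute constant $C>0$ such that the following holds. Let $U^*,S,p_{ijk},\widehat p_{ijk},\mathcal{W}_{ijk},\delta_{ijk}$ be as in the context, and let $U\in\mathbb{R}^{n\times r}$ be fixed (independent of $\delta$) with unit-norm columns and $|U_{il}|\le2\|(U^* )^i\|$ for all $i,l$. Let $\gamma\in(0,1]$, $i\in[n]$, $q\in[r]$ and $b\in\mathbb{R}^n$ be fixed. If $m\ge\frac{C}{\gamma^2}n\log(n)S^2$, then with probability at least $1-n^{-10}$, $$\Big|\sum_{j,k}\delta_{ijk}\mathcal{W}_{ijk}U^*_{iq}U_{jq}U^*_{jq}U_{kq}b_k-U^*_{iq}\langle U_q,U^*_q\rangle\langle U_q,b\rangle\Big|\le\gamma\|b\|.$$
   Context: $U^*\in\mathbb{R}^{n\times r}$ has orthonormal columns $U^*_l$ and rows $(U^* )^i$; $S=\sum_i\|(U^* )^i\|^{3/2}$; $p_{ijk}=\frac{\|(U^* )^i\|^{3/2}\|(U^* )^j\|^{3/2}+\|(U^* )^j\|^{3/2}\|(U^* )^k\|^{3/2}+\|(U^* )^k\|^{3/2}\|(U^* )^i\|^{3/2}}{3nS^2}$; $\widehat p_{ijk}=\min\{mp_{ijk},1\}$; $\mathcal{W}_{ijk}=1/\widehat p_{ijk}$ if $\widehat p_{ijk}>0$, else $0$; $\delta_{ijk}$ are independent Bernoulli$(\widehat p_{ijk})$ random variables. *)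

theory Defs
  imports "HOL-Probability.Probability"
begin

text \<open>Matrices are n x r arrays given as functions nat => nat => real,
  entry (i,l) with i < n, l < r (indices 0-based).\<close>

definition orthonormal_cols :: "nat \<Rightarrow> nat \<Rightarrow> (nat \<Rightarrow> nat \<Rightarrow> real) \<Rightarrow> bool" where
  "orthonormal_cols n r A \<longleftrightarrow>
     (\<forall>l<r. \<forall>l'<r. (\<Sum>i<n. A i l * A i l') = (if l = l' then 1 else 0))"

definition unit_cols :: "nat \<Rightarrow> nat \<Rightarrow> (nat \<Rightarrow> nat \<Rightarrow> real) \<Rightarrow> bool" where
  "unit_cols n r A \<longleftrightarrow> (\<forall>l<r. (\<Sum>i<n. (A i l)\<^sup>2) = 1)"

definition row_norm :: "nat \<Rightarrow> (nat \<Rightarrow> nat \<Rightarrow> real) \<Rightarrow> nat \<Rightarrow> real" where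
  "row_norm r A i = sqrt (\<Sum>l<r. (A i l)\<^sup>2)"

definition vec_norm :: "nat \<Rightarrow> (nat \<Rightarrow> real) \<Rightarrow> real" where
  "vec_norm n b = sqrt (\<Sum>k<n. (b k)\<^sup>2)"

definition S_const :: "nat \<Rightarrow> nat \<Rightarrow> (nat \<Rightarrow> nat \<Rightarrow> real) \<Rightarrow> real" where
  "S_const n r A = (\<Sum>i<n. row_norm r A i powr (3/2))"

definition p_prob :: "nat \<Rightarrow> nat \<Rightarrow> (nat \<Rightarrow> nat \<Rightarrow> real) \<Rightarrow> nat \<Rightarrow> nat \<Rightarrow> nat \<Rightarrow> real" where
  "p_prob n r A i j k =
     (row_norm r A i powr (3/2) * row_norm r A j powr (3/2)
      + row_norm r A j powr (3/2) * row_norm r A k powr (3/2)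
      + row_norm r A k powr (3/2) * row_norm r A i powr (3/2))
     / (3 * real n * (S_const n r A)\<^sup>2)"

definition phat :: "real \<Rightarrow> nat \<Rightarrow> nat \<Rightarrow> (nat \<Rightarrow> nat \<Rightarrow> real) \<Rightarrow> nat \<Rightarrow> nat \<Rightarrow> nat \<Rightarrow> real" where
  "phat m n r A i j k = min (m * p_prob n r A i j k) 1"

definition W_weight :: "real \<Rightarrow> nat \<Rightarrow> nat \<Rightarrow> (nat \<Rightarrow> nat \<Rightarrow> real) \<Rightarrow> nat \<Rightarrow> nat \<Rightarrow> nat \<Rightarrow> real" where
  "W_weight m n r A i j k =
     (if phat m n r A i j k > 0 then 1 / phat m n r A i j k else 0)"

definition delta_pmf :: "real \<Rightarrow> nat \<Rightarrow> nat \<Rightarrow> (nat \<Rightarrow> nat \<Rightarrow> real) \<Rightarrow> (nat \<times> nat \<times> nat \<Rightarrow> bool) pmf" where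
  "delta_pmf m n r A =
     Pi_pmf ({..<n} \<times> {..<n} \<times> {..<n}) False
       (\<lambda>(i,j,k). bernoulli_pmf (phat m n r A i j k))"

end

theory Submission
  imports Defs
begin
lemma abs_le_row_norm:
  assumes "q < r" shows "\<bar>A i q\<bar> \<le> row_norm r A i"
proof -
  have "(A i q)\<^sup>2 \<le> (\<Sum>l<r. (A i l)\<^sup>2)"
    using assms by (intro member_le_sum) auto
  hence "sqrt ((A i q)\<^sup>2) \<le> row_norm r A i" unfolding row_norm_def
    using real_sqrt_le_mono by blast
  thus ?thesis by simp
qed

lemma row_norm_nonneg: "row_norm r A i \<ge> 0"
  unfolding row_norm_def by (simp add: sum_nonneg)

lemma powr_32: assumes "(t::real) \<ge> 0" shows "t powr (3/2) = t * sqrt t"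
proof (cases "t = 0")
  case False
  hence "t powr (3/2) = t powr (1 + 1/2)" by simp
  also have "\<dots> = t powr 1 * t powr (1/2)" by (rule powr_add)
  also have "\<dots> = t * sqrt t" using assms False by (simp add: powr_half_sqrt)
  finally show ?thesis .
qed simp

lemma min_aux:
  fixes x y z :: real
  assumes "0 \<le> x" "0 \<le> y" "0 \<le> z" "z \<le> x" "z \<le> y"
  shows "x*y*z \<le> (x * sqrt x) * (y * sqrt y)"
proof -
  have "z*z \<le> x*y" using assms by (intro mult_mono) auto
  hence "sqrt (z*z) \<le> sqrt (x*y)" using real_sqrt_le_mono by blast
  hence "z \<le> sqrt x * sqrt y" using assms by (simp add: real_sqrt_mult)
  hence "x*y*z \<le> x*y*(sqrt x * sqrt y)" using assms by (intro mult_left_mono) auto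
  thus ?thesis by (simp add: algebra_simps)
qed

lemma amgm3:
  fixes x y z :: real
  assumes "0 \<le> x" "0 \<le> y" "0 \<le> z"
  shows "x*y*z \<le> x powr (3/2) * y powr (3/2) + y powr (3/2) * z powr (3/2) + z powr (3/2) * x powr (3/2)"
proof -
  have X: "x powr (3/2) = x * sqrt x" "y powr (3/2) = y * sqrt y" "z powr (3/2) = z * sqrt z"
    using assms by (simp_all add: powr_32)
  have nn: "0 \<le> x * sqrt x" "0 \<le> y * sqrt y" "0 \<le> z * sqrt z" using assms by simp_all
  consider "z \<le> x \<and> z \<le> y" | "x \<le> y \<and> x \<le> z" | "y \<le> x \<and> y \<le> z" by linarith
  thus ?thesis
  proof cases
    case 1
    have "x*y*z \<le> (x * sqrt x) * (y * sqrt y)" using 1 assms by (intro min_aux) auto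
    moreover have "0 \<le> (y * sqrt y)*(z * sqrt z) + (z * sqrt z)*(x * sqrt x)" using nn by simp
    ultimately show ?thesis unfolding X by linarith
  next
    case 2
    have "y*z*x \<le> (y * sqrt y) * (z * sqrt z)" using 2 assms by (intro min_aux) auto
    moreover have "0 \<le> (x * sqrt x)*(y * sqrt y) + (z * sqrt z)*(x * sqrt x)" using nn by simp
    ultimately show ?thesis unfolding X by (simp add: algebra_simps)
  next
    case 3
    have "z*x*y \<le> (z * sqrt z) * (x * sqrt x)" using 3 assms by (intro min_aux) auto
    moreover have "0 \<le> (x * sqrt x)*(y * sqrt y) + (y * sqrt y)*(z * sqrt z)" using nn by simp
    ultimately show ?thesis unfolding X by (simp add: algebra_simps)
  qed
qed

lemma ln2_ge: "ln (2::real) \<ge> 1/2" by (smt (verit, best) ln_add1_ge)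

lemma final_num:
  fixes n :: nat and \<gamma> S m nb :: real
  assumes n2: "n \<ge> 2" and g: "0 < \<gamma>" "\<gamma> \<le> 1" and S: "S > 0" and nb: "nb > 0"
    and mge: "m \<ge> 100 / \<gamma>\<^sup>2 * real n * ln (real n) * S\<^sup>2"
  shows "2 * exp (-2 * (\<gamma>*nb)\<^sup>2 / (576 * (real n)\<^sup>2 * S^4 * nb\<^sup>2 / m\<^sup>2)) \<le> real n powr (-10)"
proof -
  define L where "L = ln (real n)"
  have L2: "L \<ge> ln 2" unfolding L_def using n2 by simp
  hence L: "L \<ge> 1/2" using ln2_ge by linarith
  have npos: "real n > 0" using n2 by simp
  have A: "100 * real n * L * S\<^sup>2 > 0" using L npos S by simp
  have "\<gamma> * m \<ge> \<gamma> * (100 / \<gamma>\<^sup>2 * real n * L * S\<^sup>2)" using mge g unfolding L_def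
    by (intro mult_left_mono) auto
  also have "\<gamma> * (100 / \<gamma>\<^sup>2 * real n * L * S\<^sup>2) = (100 * real n * L * S\<^sup>2) / \<gamma>"
    using g by (simp add: power2_eq_square field_simps)
  also have "\<dots> \<ge> 100 * real n * L * S\<^sup>2" using g A mult_left_le[of \<gamma> "100 * real n * L * S\<^sup>2"]
    by (simp add: le_divide_eq)
  finally have gm: "\<gamma> * m \<ge> 100 * real n * L * S\<^sup>2" .
  hence mpos: "m > 0" using A g by (smt (verit) mult_nonneg_nonpos)
  have gm2: "(\<gamma> * m)\<^sup>2 \<ge> (100 * real n * L * S\<^sup>2)\<^sup>2" using gm A by (intro power_mono) auto
  have eq: "2 * (\<gamma>*nb)\<^sup>2 / (576 * (real n)\<^sup>2 * S^4 * nb\<^sup>2 / m\<^sup>2) = (\<gamma> * m)\<^sup>2 / (288 * (real n)\<^sup>2 * S^4)"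
    using nb mpos npos S by (simp add: field_simps power2_eq_square)
  have "(\<gamma> * m)\<^sup>2 / (288 * (real n)\<^sup>2 * S^4) \<ge> (100 * real n * L * S\<^sup>2)\<^sup>2 / (288 * (real n)\<^sup>2 * S^4)"
    using gm2 npos S by (intro divide_right_mono) auto
  also have "(100 * real n * L * S\<^sup>2)\<^sup>2 / (288 * (real n)\<^sup>2 * S^4) = 10000 / 288 * L\<^sup>2"
    using npos S by (simp add: field_simps power2_eq_square power4_eq_xxxx)
  also have "10000 / 288 * L\<^sup>2 \<ge> 10 * L + ln 2"
  proof -
    have "10000 / 288 * L\<^sup>2 \<ge> 11 * L" using L by (simp add: power2_eq_square)
    thus ?thesis using L2 by linarith
  qed
  finally have e: "(\<gamma> * m)\<^sup>2 / (288 * (real n)\<^sup>2 * S^4) \<ge> 10 * L + ln 2" .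
  have "2 * exp (-2 * (\<gamma>*nb)\<^sup>2 / (576 * (real n)\<^sup>2 * S^4 * nb\<^sup>2 / m\<^sup>2))
      = 2 * exp (- ((\<gamma> * m)\<^sup>2 / (288 * (real n)\<^sup>2 * S^4)))" using eq by simp
  also have "\<dots> \<le> 2 * exp (-(10 * L + ln 2))" using e by simp
  also have "\<dots> = exp (-10 * L)" by (simp add: exp_diff exp_minus field_simps)
  also have "\<dots> = real n powr (-10)" unfolding L_def using npos by (simp add: powr_def)
  finally show ?thesis .
qed

lemma term_facts:
  fixes i j k n r q :: nat and Ustar U :: "nat \<Rightarrow> nat \<Rightarrow> real" and b :: "nat \<Rightarrow> real" and m :: real
  assumes bnd: "\<forall>i'<n. \<forall>l<r. \<bar>U i' l\<bar> \<le> 2 * row_norm r Ustar i'"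
    and q: "q < r" and k: "k < n" and m: "m > 0" and S: "S_const n r Ustar > 0"
  defines "a \<equiv> Ustar i q * U j q * Ustar j q * U k q * b k"
  defines "ph \<equiv> phat m n r Ustar i j k"
  shows "ph < 1 \<Longrightarrow> \<bar>W_weight m n r Ustar i j k * a\<bar> \<le> 6 * real n * (S_const n r Ustar)\<^sup>2 * \<bar>U j q\<bar> * \<bar>b k\<bar> / m"
    and "W_weight m n r Ustar i j k * a * ph = a"
    and "0 \<le> ph" and "ph \<le> 1"
proof -
  define S where "S = S_const n r Ustar"
  define x where "x = row_norm r Ustar i"
  define y where "y = row_norm r Ustar j"
  define z where "z = row_norm r Ustar k"
  define num where "num = x powr (3/2) * y powr (3/2) + y powr (3/2) * z powr (3/2) + z powr (3/2) * x powr (3/2)"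
  define p where "p = p_prob n r Ustar i j k"
  have xyz: "0 \<le> x" "0 \<le> y" "0 \<le> z" unfolding x_def y_def z_def by (simp_all add: row_norm_nonneg)
  have npos: "real n > 0" using k by simp
  have Spos: "S > 0" using S S_def by simp
  have p_eq: "p = num / (3 * real n * S\<^sup>2)" unfolding p_def p_prob_def num_def x_def y_def z_def S_def by simp
  have num_nn: "num \<ge> 0" unfolding num_def using xyz by simp
  have p_nn: "p \<ge> 0" using p_eq num_nn npos by simp
  have num_eq: "num = 3 * real n * S\<^sup>2 * p" using p_eq npos Spos by simp
  have ph_eq: "ph = min (m * p) 1" unfolding ph_def phat_def p_def by simp
  show ph0: "0 \<le> ph" using ph_eq m p_nn by simp
  show "ph \<le> 1" using ph_eq by simp
  have i1: "\<bar>Ustar i q\<bar> \<le> x" unfolding x_def using q by (rule abs_le_row_norm)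
  have i2: "\<bar>Ustar j q\<bar> \<le> y" unfolding y_def using q by (rule abs_le_row_norm)
  have i3: "\<bar>U k q\<bar> \<le> 2 * z" unfolding z_def using bnd k q by simp
  have "\<bar>a\<bar> = \<bar>Ustar i q\<bar> * \<bar>Ustar j q\<bar> * \<bar>U k q\<bar> * (\<bar>U j q\<bar> * \<bar>b k\<bar>)"
    unfolding a_def by (simp add: abs_mult ac_simps)
  also have "\<dots> \<le> x * y * (2 * z) * (\<bar>U j q\<bar> * \<bar>b k\<bar>)"
    using i1 i2 i3 xyz by (intro mult_mono) auto
  also have "\<dots> = (x*y*z) * (2 * \<bar>U j q\<bar> * \<bar>b k\<bar>)" by simp
  also have "\<dots> \<le> num * (2 * \<bar>U j q\<bar> * \<bar>b k\<bar>)" unfolding num_def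
    using amgm3[OF xyz] by (intro mult_right_mono) auto
  finally have a_le: "\<bar>a\<bar> \<le> 6 * real n * S\<^sup>2 * \<bar>U j q\<bar> * \<bar>b k\<bar> * p" unfolding num_eq by (simp add: ac_simps)
  show "\<bar>W_weight m n r Ustar i j k * a\<bar> \<le> 6 * real n * (S_const n r Ustar)\<^sup>2 * \<bar>U j q\<bar> * \<bar>b k\<bar> / m"
    if ph1: "ph < 1"
  proof (cases "ph > 0")
    case True
    hence pp: "m * p > 0" using ph_eq by simp
    have "ph = m * p" using ph_eq ph1 by (simp add: min_def split: if_splits)
    have "\<bar>W_weight m n r Ustar i j k * a\<bar> = \<bar>a\<bar> / ph"
      using True unfolding W_weight_def ph_def[symmetric] by simp
    also have "\<dots> = \<bar>a\<bar> / (m * p)" using \<open>ph = m * p\<close> by simp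
    also have "\<dots> \<le> (6 * real n * S\<^sup>2 * \<bar>U j q\<bar> * \<bar>b k\<bar> * p) / (m * p)"
      using a_le pp by (intro divide_right_mono) auto
    also have "\<dots> = 6 * real n * S\<^sup>2 * \<bar>U j q\<bar> * \<bar>b k\<bar> / m" using pp by (cases "p = 0") (auto simp: field_simps)
    finally show ?thesis unfolding S_def .
  next
    case False
    hence "W_weight m n r Ustar i j k = 0" unfolding W_weight_def ph_def by simp
    thus ?thesis using m by simp
  qed
  show "W_weight m n r Ustar i j k * a * ph = a"
  proof (cases "ph > 0")
    case True
    thus ?thesis unfolding W_weight_def ph_def[symmetric] by simp
  next
    case False
    hence "ph = 0" using ph0 by simp
    hence "m * p = 0" using ph_eq by (simp add: min_def split: if_splits)
    hence "p = 0" using m by simp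
    hence "a = 0" using a_le by simp
    thus ?thesis by simp
  qed
qed

lemma main_lemma:
  fixes n r i q :: nat and Ustar U :: "nat \<Rightarrow> nat \<Rightarrow> real" and b :: "nat \<Rightarrow> real" and m \<gamma> :: real
  assumes orth: "orthonormal_cols n r Ustar" and unit: "unit_cols n r U"
    and bnd: "\<forall>i'<n. \<forall>l<r. \<bar>U i' l\<bar> \<le> 2 * row_norm r Ustar i'"
    and g0: "0 < \<gamma>" and g1: "\<gamma> \<le> 1" and i: "i < n" and q: "q < r" and n2: "n \<ge> 2"
    and mge: "m \<ge> 100 / \<gamma>\<^sup>2 * real n * ln (real n) * (S_const n r Ustar)\<^sup>2"
    and nbpos: "vec_norm n b > 0"
  shows "measure_pmf.prob (delta_pmf m n r Ustar)
       {\<delta>. \<bar>(\<Sum>j<n. \<Sum>k<n. of_bool (\<delta> (i,j,k)) * W_weight m n r Ustar i j k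
                 * Ustar i q * U j q * Ustar j q * U k q * b k)
             - Ustar i q * (\<Sum>j<n. U j q * Ustar j q) * (\<Sum>k<n. U k q * b k)\<bar>
           \<le> \<gamma> * vec_norm n b}
     \<ge> 1 - real n powr (-10)"
proof -
  define S where "S = S_const n r Ustar"
  define nb where "nb = vec_norm n b"
  have npos: "real n > 0" using n2 by simp
  have colq: "(\<Sum>i'<n. Ustar i' q * Ustar i' q) = 1" using orth q unfolding orthonormal_cols_def by auto
  obtain i0 where i0: "i0 < n" "Ustar i0 q \<noteq> 0"
  proof (rule ccontr)
    assume "\<not> thesis"
    hence "\<forall>i'<n. Ustar i' q = 0" using that by blast
    hence "(\<Sum>i'<n. Ustar i' q * Ustar i' q) = 0" by simp
    thus False using colq by simp
  qed
  have "0 < \<bar>Ustar i0 q\<bar>" using i0 by simp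
  also have "\<dots> \<le> row_norm r Ustar i0" using q by (rule abs_le_row_norm)
  finally have rn0: "row_norm r Ustar i0 > 0" .
  have Spos: "S > 0" unfolding S_def S_const_def
    by (rule sum_pos2[of _ i0]) (use i0 rn0 row_norm_nonneg in auto)
  have Lpos: "ln (real n) > 0" using n2 by simp
  have mpos: "m > 0"
  proof -
    have "100 / \<gamma>\<^sup>2 * real n * ln (real n) * S\<^sup>2 > 0" using g0 npos Lpos Spos by simp
    thus ?thesis using mge unfolding S_def by linarith
  qed
  have nb2: "nb\<^sup>2 = (\<Sum>k<n. (b k)\<^sup>2)" unfolding nb_def vec_norm_def by (simp add: sum_nonneg)
  have U2: "(\<Sum>j<n. (U j q)\<^sup>2) = 1" using unit q unfolding unit_cols_def by auto
  define D where "D = delta_pmf m n r Ustar"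
  define ph where "ph j k = phat m n r Ustar i j k" for j k
  define a where "a j k = Ustar i q * U j q * Ustar j q * U k q * b k" for j k
  define c where "c j k = W_weight m n r Ustar i j k * a j k" for j k
  define R where "R j k = 6 * S\<^sup>2 * (real n * \<bar>U j q\<bar> * \<bar>b k\<bar> + nb) / m" for j k
  define ctr where "ctr j k = (if ph j k = 1 then c j k else 0)" for j k
  define X where "X = (\<lambda>(t::nat\<times>nat\<times>nat) (\<delta>::nat\<times>nat\<times>nat\<Rightarrow>bool). of_bool (\<delta> t) * c (fst (snd t)) (snd (snd t)))"
  define lo where "lo = (\<lambda>t::nat\<times>nat\<times>nat. ctr (fst (snd t)) (snd (snd t)) - R (fst (snd t)) (snd (snd t)))"
  define hi where "hi = (\<lambda>t::nat\<times>nat\<times>nat. ctr (fst (snd t)) (snd (snd t)) + R (fst (snd t)) (snd (snd t)))"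
  define K where "K = {..<n} \<times> {..<n} \<times> {..<n}"
  define T where "T = (\<lambda>(j,k). (i,j,k)) ` ({..<n} \<times> {..<n})"
  have finK: "finite K" unfolding K_def by simp
  have TK: "T \<subseteq> K" unfolding T_def K_def using i by auto
  have finT: "finite T" unfolding T_def by simp
  have sumT: "(\<Sum>t\<in>T. f t) = (\<Sum>j<n. \<Sum>k<n. f (i,j,k))" for f :: "nat\<times>nat\<times>nat \<Rightarrow> real"
  proof -
    have inj: "inj_on (\<lambda>(j,k). (i::nat,j::nat,k::nat)) ({..<n} \<times> {..<n})" by (auto simp: inj_on_def)
    have "(\<Sum>t\<in>T. f t) = (\<Sum>(j,k)\<in>{..<n} \<times> {..<n}. f (i,j,k))"
      unfolding T_def by (subst sum.reindex[OF inj]) (simp add: case_prod_unfold)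
    also have "\<dots> = (\<Sum>j<n. \<Sum>k<n. f (i,j,k))" by (simp add: sum.cartesian_product)
    finally show ?thesis .
  qed
  have SposS: "S_const n r Ustar > 0" using Spos S_def by simp
  have tf1: "\<bar>c j k\<bar> \<le> 6 * real n * S\<^sup>2 * \<bar>U j q\<bar> * \<bar>b k\<bar> / m" if "k < n" "ph j k < 1" for j k
    using term_facts(1)[OF bnd q that(1) mpos SposS, where i=i and j=j and b=b] that(2)
    unfolding c_def a_def ph_def S_def by simp
  have tf2: "c j k * ph j k = a j k" if "k < n" for j k
    using term_facts(2)[OF bnd q that(1) mpos SposS, where i=i and j=j and b=b]
    unfolding c_def a_def ph_def S_def by simp
  have tf3: "0 \<le> ph j k" "ph j k \<le> 1" if "k < n" for j k
    using term_facts(3,4)[OF bnd q that(1) mpos SposS, where i=i and j=j]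
    unfolding c_def a_def ph_def S_def by simp_all
  have comp: "map_pmf (\<lambda>f. f (i,j,k)) D = bernoulli_pmf (ph j k)" if "j < n" "k < n" for j k
    unfolding D_def delta_pmf_def ph_def using that i by (subst Pi_pmf_component) auto
  have EX: "measure_pmf.expectation D (X (i,j,k)) = a j k" if "j < n" "k < n" for j k
  proof -
    have "measure_pmf.expectation D (X (i,j,k)) = measure_pmf.expectation D (\<lambda>f. (\<lambda>v. of_bool v * c j k) (f (i,j,k)))"
      unfolding X_def by simp
    also have "\<dots> = measure_pmf.expectation (map_pmf (\<lambda>f. f (i,j,k)) D) (\<lambda>v. of_bool v * c j k)"
      by simp
    also have "\<dots> = c j k * ph j k" using comp[OF that] tf3[OF that(2), of j] by simp
    finally show ?thesis using tf2[OF that(2), of j] by simp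
  qed
  have Rnn: "R j k \<ge> 0" for j k unfolding R_def using mpos nbpos nb_def by simp
  have AE: "AE \<delta> in measure_pmf D. X (i,j,k) \<delta> \<in> {lo (i,j,k)..hi (i,j,k)}" if "j < n" "k < n" for j k
  proof (subst AE_measure_pmf_iff, intro ballI)
    fix \<delta> assume "\<delta> \<in> set_pmf D"
    hence dt: "\<delta> (i,j,k) \<in> set_pmf (bernoulli_pmf (ph j k))"
      using comp[OF that, symmetric] by auto
    show "X (i,j,k) \<delta> \<in> {lo (i,j,k)..hi (i,j,k)}"
    proof (cases "ph j k = 1")
      case True
      hence "\<delta> (i,j,k)" using dt by (cases "\<delta> (i,j,k)") (auto simp: set_pmf_iff)
      thus ?thesis using True Rnn[of j k] unfolding X_def lo_def hi_def ctr_def by simp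
    next
      case False
      hence ph1: "ph j k < 1" using tf3[OF that(2), of j] by simp
      have "6 * real n * S\<^sup>2 * \<bar>U j q\<bar> * \<bar>b k\<bar> / m \<le> R j k" unfolding R_def
        using mpos nbpos nb_def by (intro divide_right_mono) (auto simp: algebra_simps)
      with tf1[OF that(2) ph1] have "\<bar>c j k\<bar> \<le> R j k" by linarith
      hence "\<bar>X (i,j,k) \<delta>\<bar> \<le> R j k" unfolding X_def using Rnn[of j k] by auto
      thus ?thesis using False unfolding lo_def hi_def ctr_def by auto
    qed
  qed
  have indep: "prob_space.indep_vars (measure_pmf D) (\<lambda>_. borel) X T"
  proof -
    have "prob_space.indep_vars (measure_pmf D) (\<lambda>_. count_space UNIV) (\<lambda>x f. f x) K"
      unfolding D_def delta_pmf_def K_def by (rule indep_vars_Pi_pmf) simp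
    hence "prob_space.indep_vars (measure_pmf D) (\<lambda>_. count_space UNIV) (\<lambda>x f. f x) T"
      using TK by (rule prob_space.indep_vars_subset[OF measure_pmf.prob_space_axioms])
    hence "prob_space.indep_vars (measure_pmf D) (\<lambda>_. borel)
             (\<lambda>t f. (\<lambda>v. of_bool v * c (fst (snd t)) (snd (snd t))) (f t)) T"
      by (rule prob_space.indep_vars_compose2[OF measure_pmf.prob_space_axioms]) simp
    thus ?thesis unfolding X_def by simp
  qed
  have Tmem: "\<exists>j k. t = (i,j,k) \<and> j < n \<and> k < n" if "t \<in> T" for t
    using that unfolding T_def by auto
  interpret H: Hoeffding_ineq "measure_pmf D" T X lo hi "\<Sum>t\<in>T. measure_pmf.expectation D (X t)"
  proof unfold_locales
    show "finite T" by (rule finT)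
    show "prob_space.indep_vars (measure_pmf D) (\<lambda>_. borel) X T" by (rule indep)
    fix t assume "t \<in> T"
    then obtain j k where "t = (i,j,k)" "j < n" "k < n" using Tmem by blast
    thus "AE x in measure_pmf D. X t x \<in> {lo t..hi t}" using AE by simp
  qed simp
  have mu: "(\<Sum>t\<in>T. measure_pmf.expectation D (X t))
      = Ustar i q * (\<Sum>j<n. U j q * Ustar j q) * (\<Sum>k<n. U k q * b k)"
  proof -
    have "(\<Sum>t\<in>T. measure_pmf.expectation D (X t)) = (\<Sum>j<n. \<Sum>k<n. a j k)"
      unfolding sumT using EX by simp
    also have "\<dots> = Ustar i q * (\<Sum>j<n. U j q * Ustar j q) * (\<Sum>k<n. U k q * b k)"
      unfolding a_def by (simp add: sum_distrib_left sum_distrib_right ac_simps)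
    finally show ?thesis .
  qed
  have sumX: "(\<Sum>t\<in>T. X t \<delta>) = (\<Sum>j<n. \<Sum>k<n. of_bool (\<delta> (i,j,k)) * W_weight m n r Ustar i j k
                 * Ustar i q * U j q * Ustar j q * U k q * b k)" for \<delta>
    unfolding sumT X_def c_def a_def by (simp add: mult.assoc)
  define B where "B = 576 * (real n)\<^sup>2 * S^4 * nb\<^sup>2 / m\<^sup>2"
  have width: "(\<Sum>t\<in>T. (hi t - lo t)\<^sup>2) = (\<Sum>j<n. \<Sum>k<n. (2 * R j k)\<^sup>2)"
    unfolding sumT hi_def lo_def by simp
  have Rpos: "R j k > 0" for j k
  proof -
    have "0 < 6 * S\<^sup>2 * nb / m" using Spos nbpos nb_def mpos by simp
    also have "\<dots> \<le> R j k" unfolding R_def using mpos by (intro divide_right_mono) (auto simp: algebra_simps)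
    finally show ?thesis .
  qed
  have Wpos: "(\<Sum>t\<in>T. (hi t - lo t)\<^sup>2) > 0"
  proof -
    have p2: "(2 * R j k)\<^sup>2 > 0" for j k using Rpos[of j k] by simp
    have ne: "{..<n} \<noteq> {}" using n2 lessThan_empty_iff by (metis not_numeral_le_zero)
    show ?thesis unfolding width using ne p2 by (intro sum_pos) (auto intro!: sum_pos)
  qed
  have sq: "(2 * R j k)\<^sup>2 \<le> 288 * S^4 / m\<^sup>2 * ((real n)\<^sup>2 * (U j q)\<^sup>2 * (b k)\<^sup>2 + nb\<^sup>2)" for j k
  proof -
    define x where "x = real n * \<bar>U j q\<bar> * \<bar>b k\<bar>"
    have xy: "(x + nb)\<^sup>2 \<le> 2 * (x\<^sup>2 + nb\<^sup>2)"
    proof -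
      have "0 \<le> (x - nb)\<^sup>2" by simp
      moreover have "(x + nb)\<^sup>2 = 2 * (x\<^sup>2 + nb\<^sup>2) - (x - nb)\<^sup>2" by (simp add: power2_eq_square algebra_simps)
      ultimately show ?thesis by linarith
    qed
    have "(2 * R j k)\<^sup>2 = 144 * S^4 / m\<^sup>2 * (x + nb)\<^sup>2"
      unfolding R_def x_def using mpos by (simp add: power2_eq_square power4_eq_xxxx field_simps)
    also have "\<dots> \<le> 144 * S^4 / m\<^sup>2 * (2 * (x\<^sup>2 + nb\<^sup>2))" using xy by (intro mult_left_mono) auto
    also have "x\<^sup>2 = (real n)\<^sup>2 * (U j q)\<^sup>2 * (b k)\<^sup>2" unfolding x_def by (simp add: power_mult_distrib)
    finally show ?thesis by (simp add: algebra_simps)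
  qed
  have Wle: "(\<Sum>t\<in>T. (hi t - lo t)\<^sup>2) \<le> B"
  proof -
    have "(\<Sum>t\<in>T. (hi t - lo t)\<^sup>2) \<le> (\<Sum>j<n. \<Sum>k<n. 288 * S^4 / m\<^sup>2 * ((real n)\<^sup>2 * (U j q)\<^sup>2 * (b k)\<^sup>2 + nb\<^sup>2))"
      unfolding width by (intro sum_mono sq)
    also have "\<dots> = 288 * S^4 / m\<^sup>2 * ((real n)\<^sup>2 * (\<Sum>j<n. (U j q)\<^sup>2) * (\<Sum>k<n. (b k)\<^sup>2) + real n * real n * nb\<^sup>2)"
    proof -
      have e2: "(\<Sum>k<n. (real n)\<^sup>2 * (U j q)\<^sup>2 * (b k)\<^sup>2 + nb\<^sup>2) = (real n)\<^sup>2 * (U j q)\<^sup>2 * (\<Sum>k<n. (b k)\<^sup>2) + real n * nb\<^sup>2" for j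
        by (simp add: sum.distrib sum_distrib_left)
      have e3: "(\<Sum>j<n. (real n)\<^sup>2 * (U j q)\<^sup>2 * (\<Sum>k<n. (b k)\<^sup>2) + real n * nb\<^sup>2) = (real n)\<^sup>2 * (\<Sum>j<n. (U j q)\<^sup>2) * (\<Sum>k<n. (b k)\<^sup>2) + real n * real n * nb\<^sup>2"
      proof -
        have "(\<Sum>j<n. (real n)\<^sup>2 * (U j q)\<^sup>2 * (\<Sum>k<n. (b k)\<^sup>2)) = (real n)\<^sup>2 * (\<Sum>j<n. (U j q)\<^sup>2) * (\<Sum>k<n. (b k)\<^sup>2)"
          by (simp only: sum_distrib_left[symmetric] sum_distrib_right[symmetric])
        thus ?thesis by (simp add: sum.distrib)
      qed
      show ?thesis by (simp only: sum_distrib_left[symmetric] e2 e3)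
    qed
    also have "\<dots> = B" unfolding B_def U2 nb2[symmetric] by (simp add: power2_eq_square)
    finally show ?thesis .
  qed
  have Bpos: "B > 0" unfolding B_def using npos Spos nbpos nb_def mpos by simp
  define F where "F = {x\<in>space (measure_pmf D). \<bar>(\<Sum>t\<in>T. X t x) - (\<Sum>t\<in>T. measure_pmf.expectation D (X t))\<bar> \<ge> \<gamma> * nb}"
  have "measure_pmf.prob D F \<le> 2 * exp (-2 * (\<gamma> * nb)\<^sup>2 / (\<Sum>t\<in>T. (hi t - lo t)\<^sup>2))"
    unfolding F_def using g0 nbpos nb_def Wpos by (intro H.Hoeffding_ineq_abs_ge) auto
  also have "\<dots> \<le> 2 * exp (-2 * (\<gamma> * nb)\<^sup>2 / B)"
  proof -
    have "2 * (\<gamma> * nb)\<^sup>2 / B \<le> 2 * (\<gamma> * nb)\<^sup>2 / (\<Sum>t\<in>T. (hi t - lo t)\<^sup>2)"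
      by (rule divide_left_mono) (use Wle Wpos Bpos in auto)
    thus ?thesis by simp
  qed
  also have "\<dots> \<le> real n powr (-10)" unfolding B_def
    by (rule final_num[OF n2 g0 g1 Spos]) (use nbpos nb_def mge S_def in auto)
  finally have PF: "measure_pmf.prob D F \<le> real n powr (-10)" .
  have sub: "UNIV - F \<subseteq> {\<delta>. \<bar>(\<Sum>j<n. \<Sum>k<n. of_bool (\<delta> (i,j,k)) * W_weight m n r Ustar i j k
                 * Ustar i q * U j q * Ustar j q * U k q * b k)
             - Ustar i q * (\<Sum>j<n. U j q * Ustar j q) * (\<Sum>k<n. U k q * b k)\<bar>
           \<le> \<gamma> * vec_norm n b}"
    unfolding F_def sumX[symmetric] mu[symmetric] nb_def by auto
  have "1 - real n powr (-10) \<le> 1 - measure_pmf.prob D F" using PF by simp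
  also have "\<dots> = measure_pmf.prob D (UNIV - F)"
    using measure_pmf.prob_compl[of F D] by simp
  also have "\<dots> \<le> measure_pmf.prob D {\<delta>. \<bar>(\<Sum>j<n. \<Sum>k<n. of_bool (\<delta> (i,j,k)) * W_weight m n r Ustar i j k
                 * Ustar i q * U j q * Ustar j q * U k q * b k)
             - Ustar i q * (\<Sum>j<n. U j q * Ustar j q) * (\<Sum>k<n. U k q * b k)\<bar>
           \<le> \<gamma> * vec_norm n b}"
    using sub by (rule measure_pmf.finite_measure_mono) simp
  finally show ?thesis unfolding D_def .
qed


theorem mainTheorem6:
  shows "\<exists>C>0. \<forall>(n::nat) (r::nat) (Ustar::nat \<Rightarrow> nat \<Rightarrow> real) (U::nat \<Rightarrow> nat \<Rightarrow> real)
            (\<gamma>::real) (i::nat) (q::nat) (b::nat \<Rightarrow> real) (m::real).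
     orthonormal_cols n r Ustar \<longrightarrow>
     unit_cols n r U \<longrightarrow>
     (\<forall>i'<n. \<forall>l<r. \<bar>U i' l\<bar> \<le> 2 * row_norm r Ustar i') \<longrightarrow>
     0 < \<gamma> \<longrightarrow> \<gamma> \<le> 1 \<longrightarrow> i < n \<longrightarrow> q < r \<longrightarrow>
     m \<ge> C / \<gamma>\<^sup>2 * real n * ln (real n) * (S_const n r Ustar)\<^sup>2 \<longrightarrow>
     measure_pmf.prob (delta_pmf m n r Ustar)
       {\<delta>. \<bar>(\<Sum>j<n. \<Sum>k<n. of_bool (\<delta> (i,j,k)) * W_weight m n r Ustar i j k
                 * Ustar i q * U j q * Ustar j q * U k q * b k)
             - Ustar i q * (\<Sum>j<n. U j q * Ustar j q) * (\<Sum>k<n. U k q * b k)\<bar>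
           \<le> \<gamma> * vec_norm n b}
     \<ge> 1 - real n powr (-10)"
proof (rule exI[of _ 100], intro conjI allI impI)
  fix n r :: nat and Ustar U :: "nat \<Rightarrow> nat \<Rightarrow> real" and \<gamma> :: real and i q :: nat
    and b :: "nat \<Rightarrow> real" and m :: real
  assume orth: "orthonormal_cols n r Ustar" and unit: "unit_cols n r U"
    and bnd: "\<forall>i'<n. \<forall>l<r. \<bar>U i' l\<bar> \<le> 2 * row_norm r Ustar i'"
    and g0: "0 < \<gamma>" and g1: "\<gamma> \<le> 1" and i: "i < n" and q: "q < r"
    and mge: "m \<ge> 100 / \<gamma>\<^sup>2 * real n * ln (real n) * (S_const n r Ustar)\<^sup>2"
  define E where "E = {\<delta>. \<bar>(\<Sum>j<n. \<Sum>k<n. of_bool (\<delta> (i,j,k)) * W_weight m n r Ustar i j k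
                 * Ustar i q * U j q * Ustar j q * U k q * b k)
             - Ustar i q * (\<Sum>j<n. U j q * Ustar j q) * (\<Sum>k<n. U k q * b k)\<bar>
           \<le> \<gamma> * vec_norm n b}"
  have "measure_pmf.prob (delta_pmf m n r Ustar) E \<ge> 1 - real n powr (-10)"
  proof (cases "n \<ge> 2")
    case False
    hence "n = 1" using i by simp
    thus ?thesis by simp
  next
    case n2: True
    show ?thesis
    proof (cases "vec_norm n b > 0")
      case True
      thus ?thesis unfolding E_def using main_lemma[OF orth unit bnd g0 g1 i q n2 mge] by simp
    next
      case False
      have "vec_norm n b \<ge> 0" unfolding vec_norm_def by (simp add: sum_nonneg)
      hence "vec_norm n b = 0" using False by simp
      hence "(\<Sum>k<n. (b k)\<^sup>2) = 0" unfolding vec_norm_def by (simp add: sum_nonneg)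
      hence b0: "\<forall>k\<in>{..<n}. (b k)\<^sup>2 = 0" by (subst (asm) sum_nonneg_eq_0_iff) auto
      have "E = UNIV" unfolding E_def using b0 \<open>vec_norm n b = 0\<close> by simp
      hence "measure_pmf.prob (delta_pmf m n r Ustar) E = 1" by simp
      moreover have "real n powr (-10) \<ge> 0" by simp
      ultimately show ?thesis by linarith
    qed
  qed
  thus "measure_pmf.prob (delta_pmf m n r Ustar)
       {\<delta>. \<bar>(\<Sum>j<n. \<Sum>k<n. of_bool (\<delta> (i,j,k)) * W_weight m n r Ustar i j k
                 * Ustar i q * U j q * Ustar j q * U k q * b k)
             - Ustar i q * (\<Sum>j<n. U j q * Ustar j q) * (\<Sum>k<n. U k q * b k)\<bar>
           \<le> \<gamma> * vec_norm n b}
     \<ge> 1 - real n powr (-10)" unfolding E_def .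
qed (simp)

end
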